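(* Let $R$ be a ring with a nice topology. If $R$ is Dedekind-finite and (von Neumann) regular, then $R$ is a full exchange ring.
   Context: $R$ is Dedekind-finite if $xy=1$ implies $yx=1$; regular means every $x$ satisfies $x=xyx$ for some $y$. A linear Hausdorff topology on $R$ is a ring topology with a basis $\mathfrak U$ of neighborhoods of $0$ consisting of left ideals, with $\bigcap_{U\in\mathfrak U}U=0$. A family $\{x_i\}_{i\in I}\subseteq R$ is summable to $r$ if for every $U\in\mathfrak U$ there is a finite $F'\subseteq I$ with $\sum_{i\in F}x_i-r\in U$ for all finite $F$ with $F'\subseteq F\subseteq I$ (write $\sum_{i\in I}x_i=r$; the family is then called summable). The topology is nice if it is linear, Hausdorff, and for every summable family $\{x_i\}_{i\in I}$ and every family $\{r_i\}_{i\in I}\subseteq R$ the family $\{r_ix_i\}_{i\in I}$ is summable. For a cardinal $\aleph$, $R$ is an $\aleph$-exchange ring if for every family $\{x_i\}_{i\in I}$ with $|I|\le\aleph$ summable to $1$ there exist pairwise orthogonal idempotents $e_i\in Rx_i$ forming a summable family with $\sum_{i\in I}e_i=1$; $R$ is a full exchange ring if it is an $\aleph$-exchange ring for every cardinal $\aleph$. *)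

theory Defs
  imports Main
begin

definition left_ideal :: "'a::ring_1 set \<Rightarrow> bool" where
  "left_ideal L \<longleftrightarrow> 0 \<in> L \<and> (\<forall>a\<in>L. \<forall>b\<in>L. a - b \<in> L) \<and> (\<forall>r a. a \<in> L \<longrightarrow> r * a \<in> L)"

text \<open>U is a basis of neighbourhoods of 0 of a ring topology, consisting of left
  ideals (filter base; continuity of right multiplication by fixed elements;
  the other ring-topology axioms are automatic for left ideals), and Hausdorff.\<close>
definition linear_hausdorff :: "'a::ring_1 set set \<Rightarrow> bool" where
  "linear_hausdorff U \<longleftrightarrow>
     U \<noteq> {} \<and>
     (\<forall>V\<in>U. left_ideal V) \<and>
     (\<forall>V\<in>U. \<forall>W\<in>U. \<exists>Z\<in>U. Z \<subseteq> V \<inter> W) \<and>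
     (\<forall>V\<in>U. \<forall>x. \<exists>W\<in>U. (\<lambda>w. w * x) ` W \<subseteq> V) \<and>
     \<Inter> U = {0}"

definition sums_to :: "'a::ring_1 set set \<Rightarrow> ('i \<Rightarrow> 'a) \<Rightarrow> 'i set \<Rightarrow> 'a \<Rightarrow> bool" where
  "sums_to U x I r \<longleftrightarrow>
     (\<forall>V\<in>U. \<exists>F'. finite F' \<and> F' \<subseteq> I \<and>
        (\<forall>F. finite F \<and> F' \<subseteq> F \<and> F \<subseteq> I \<longrightarrow> sum x F - r \<in> V))"

definition summable_fam :: "'a::ring_1 set set \<Rightarrow> ('i \<Rightarrow> 'a) \<Rightarrow> 'i set \<Rightarrow> bool" where
  "summable_fam U x I \<longleftrightarrow> (\<exists>r. sums_to U x I r)"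

definition nice_idx :: "'a::ring_1 set set \<Rightarrow> 'i itself \<Rightarrow> bool" where
  "nice_idx U _ \<longleftrightarrow> linear_hausdorff U \<and>
     (\<forall>(I::'i set) x rs. summable_fam U x I \<longrightarrow> summable_fam U (\<lambda>i. rs i * x i) I)"

definition exchange_idx :: "'a::ring_1 set set \<Rightarrow> 'i itself \<Rightarrow> bool" where
  "exchange_idx U _ \<longleftrightarrow>
     (\<forall>(I::'i set) x. sums_to U x I 1 \<longrightarrow>
        (\<exists>e. (\<forall>i\<in>I. \<exists>r. e i = r * x i) \<and>
             (\<forall>i\<in>I. e i * e i = e i) \<and>
             (\<forall>i\<in>I. \<forall>j\<in>I. i \<noteq> j \<longrightarrow> e i * e j = 0) \<and>
             sums_to U e I 1))"

definition dedekind_finite :: "'a::ring_1 itself \<Rightarrow> bool" where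
  "dedekind_finite _ \<longleftrightarrow> (\<forall>x y::'a. x * y = 1 \<longrightarrow> y * x = 1)"

definition vn_regular :: "'a::ring_1 itself \<Rightarrow> bool" where
  "vn_regular _ \<longleftrightarrow> (\<forall>x::'a. \<exists>y. x = x * y * x)"

end

theory Submission
  imports Defs
begin

definition tsum :: "'a::ring_1 set set \<Rightarrow> ('i \<Rightarrow> 'a) \<Rightarrow> 'i set \<Rightarrow> 'a" where
  "tsum U f A = (THE s. sums_to U f A s)"

definition fof :: "'a::ring_1 \<Rightarrow> 'a" where
  "fof u = (SOME w. u = u * w * u) * u"

definition zof :: "'a::ring_1 \<Rightarrow> 'a \<Rightarrow> 'a" where
  "zof u xi = xi * (1 - fof u)"

definition tauof :: "'a::ring_1 \<Rightarrow> 'a \<Rightarrow> 'a" where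
  "tauof u xi = (1 - fof u) * (SOME w. zof u xi = zof u xi * w * zof u xi)"

definition hstep :: "'a::ring_1 \<Rightarrow> 'a \<Rightarrow> 'a" where
  "hstep u xi = tauof u xi * zof u xi * tauof u xi * xi"

lemma sums_cong:
  assumes "\<And>i. i \<in> I \<Longrightarrow> x i = y i"
  shows "sums_to U x I r \<longleftrightarrow> sums_to U y I r"
proof -
  have e: "sum x F = sum y F" if "F \<subseteq> I" for F
  proof (rule sum.cong[OF refl])
    fix i assume "i \<in> F" then show "x i = y i" using assms that by blast
  qed
  have "(\<forall>F. finite F \<and> F' \<subseteq> F \<and> F \<subseteq> I \<longrightarrow> sum x F - r \<in> V) \<longleftrightarrow>
        (\<forall>F. finite F \<and> F' \<subseteq> F \<and> F \<subseteq> I \<longrightarrow> sum y F - r \<in> V)" for F' V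
  proof (intro iffI allI impI)
    fix F assume A: "\<forall>F. finite F \<and> F' \<subseteq> F \<and> F \<subseteq> I \<longrightarrow> sum x F - r \<in> V"
      and F: "finite F \<and> F' \<subseteq> F \<and> F \<subseteq> I"
    have "sum x F - r \<in> V" using A[rule_format, OF F] .
    then show "sum y F - r \<in> V" using e[of F] F by simp
  next
    fix F assume A: "\<forall>F. finite F \<and> F' \<subseteq> F \<and> F \<subseteq> I \<longrightarrow> sum y F - r \<in> V"
      and F: "finite F \<and> F' \<subseteq> F \<and> F \<subseteq> I"
    have "sum y F - r \<in> V" using A[rule_format, OF F] .
    then show "sum x F - r \<in> V" using e[of F] F by simp
  qed
  then show ?thesis unfolding sums_to_def by simp
qed

lemma tsum_cong:
  assumes "\<And>i. i \<in> I \<Longrightarrow> x i = y i"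
  shows "tsum U x I = tsum U y I"
proof -
  have "\<And>r. sums_to U x I r = sums_to U y I r" using sums_cong assms by blast
  then have "sums_to U x I = sums_to U y I" by (rule ext)
  then show ?thesis unfolding tsum_def by simp
qed

lemma sums_toD:
  assumes "sums_to U x I r" "V \<in> U"
  obtains F' where "finite F'" "F' \<subseteq> I" "\<And>F. finite F \<Longrightarrow> F' \<subseteq> F \<Longrightarrow> F \<subseteq> I \<Longrightarrow> sum x F - r \<in> V"
proof -
  have "\<exists>F'. finite F' \<and> F' \<subseteq> I \<and> (\<forall>F. finite F \<and> F' \<subseteq> F \<and> F \<subseteq> I \<longrightarrow> sum x F - r \<in> V)"
    using assms(1) unfolding sums_to_def using assms(2) by (rule bspec)
  then obtain F' where F': "finite F'" "F' \<subseteq> I" "\<forall>F. finite F \<and> F' \<subseteq> F \<and> F \<subseteq> I \<longrightarrow> sum x F - r \<in> V"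
    by (elim exE conjE)
  show ?thesis
  proof (rule that[OF F'(1,2)])
    fix F assume "finite F" "F' \<subseteq> F" "F \<subseteq> I"
    then show "sum x F - r \<in> V" using F'(3) by blast
  qed
qed

lemma sums_toI:
  assumes "\<And>V. V \<in> U \<Longrightarrow> \<exists>F'. finite F' \<and> F' \<subseteq> I \<and> (\<forall>F. finite F \<and> F' \<subseteq> F \<and> F \<subseteq> I \<longrightarrow> sum x F - r \<in> V)"
  shows "sums_to U x I r"
  unfolding sums_to_def using assms by (intro ballI)

lemma sums_zero_ext:
  assumes "J \<subseteq> I" and "\<And>i. i \<in> I - J \<Longrightarrow> x i = 0"
  shows "sums_to U x I r \<longleftrightarrow> sums_to U x J r"
proof -
  have key: "sum x F = sum x (F \<inter> J)" if "F \<subseteq> I" "finite F" for F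
  proof -
    have "sum x F = sum x (F \<inter> J) + sum x (F - J)" using that(2) by (rule sum.Int_Diff)
    moreover have "\<forall>i\<in>F - J. x i = 0" using that(1) assms(2) by blast
    then have "sum x (F - J) = 0" by (rule sum.neutral)
    ultimately show ?thesis by simp
  qed
  show ?thesis
  proof
    assume A: "sums_to U x I r"
    show "sums_to U x J r"
    proof (rule sums_toI)
      fix V assume V: "V \<in> U"
      obtain F' where F': "finite F'" "F' \<subseteq> I"
        "\<And>F. finite F \<Longrightarrow> F' \<subseteq> F \<Longrightarrow> F \<subseteq> I \<Longrightarrow> sum x F - r \<in> V"
        using sums_toD[OF A V] by blast
      show "\<exists>F'. finite F' \<and> F' \<subseteq> J \<and> (\<forall>F. finite F \<and> F' \<subseteq> F \<and> F \<subseteq> J \<longrightarrow> sum x F - r \<in> V)"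
      proof (rule exI[of _ "F' \<inter> J"], intro conjI allI impI)
        show "finite (F' \<inter> J)" using F' by simp
        show "F' \<inter> J \<subseteq> J" by simp
        fix F assume F: "finite F \<and> F' \<inter> J \<subseteq> F \<and> F \<subseteq> J"
        have fin: "finite (F \<union> F')" using F F'(1) by simp
        have sub: "F \<union> F' \<subseteq> I" using F F'(2) assms(1) by blast
        have "sum x (F \<union> F') - r \<in> V" using F'(3)[OF fin _ sub] by simp
        moreover have "(F \<union> F') \<inter> J = F" using F by blast
        moreover have "sum x (F \<union> F') = sum x ((F \<union> F') \<inter> J)" using key[OF sub fin] .
        ultimately show "sum x F - r \<in> V" by simp
      qed
    qed
  next
    assume A: "sums_to U x J r"
    show "sums_to U x I r"
    proof (rule sums_toI)
      fix V assume V: "V \<in> U"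
      obtain F' where F': "finite F'" "F' \<subseteq> J"
        "\<And>F. finite F \<Longrightarrow> F' \<subseteq> F \<Longrightarrow> F \<subseteq> J \<Longrightarrow> sum x F - r \<in> V"
        using sums_toD[OF A V] by blast
      show "\<exists>F'. finite F' \<and> F' \<subseteq> I \<and> (\<forall>F. finite F \<and> F' \<subseteq> F \<and> F \<subseteq> I \<longrightarrow> sum x F - r \<in> V)"
      proof (rule exI[of _ F'], intro conjI allI impI)
        show "finite F'" using F' by simp
        show "F' \<subseteq> I" using F'(2) assms(1) by blast
        fix F assume F: "finite F \<and> F' \<subseteq> F \<and> F \<subseteq> I"
        have "finite (F \<inter> J)" "F' \<subseteq> F \<inter> J" "F \<inter> J \<subseteq> J" using F F'(2) by auto
        then have "sum x (F \<inter> J) - r \<in> V" using F'(3) by blast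
        then show "sum x F - r \<in> V" using key[of F] F by simp
      qed
    qed
  qed
qed

lemma hstep_alg:
  fixes f z xi w t :: "'a::ring_1"
  assumes ff: "f * f = f" and zdef: "z = xi * (1 - f)" and zw: "z * w * z = z"
    and tdef: "t = (1 - f) * w"
  shows "f * (t * z * t * xi) = 0"
    and "(t * z * t * xi) * (t * z * t * xi) = t * z * t * xi"
    and "(t * z * t * xi) * (1 - f) = t * z"
    and "z * (t * z) = z"
    and "(t * z) * (t * z) = t * z"
    and "f * (t * z) = 0"
proof -
  have f1f: "f * (1 - f) = 0" using ff by (simp add: right_diff_distrib)
  have ff1: "(1 - f) * (1 - f) = 1 - f" using f1f by (simp add: left_diff_distrib)
  have z1f: "z * (1 - f) = z" using ff1 zdef by (simp add: mult.assoc)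
  have ft: "f * t = 0" using f1f tdef by (simp add: mult.assoc[symmetric])
  have ztz: "z * t * z = z" using z1f zw tdef by (simp add: mult.assoc[symmetric])
  have xtz: "xi * t * z = z" using zdef zw tdef by (simp add: mult.assoc)
  have ztzY: "z * (t * (z * Y)) = z * Y" for Y using ztz by (metis mult.assoc)
  have xtzY: "xi * (t * (z * Y)) = z * Y" for Y using xtz by (metis mult.assoc)
  show "f * (t * z * t * xi) = 0" using ft by (simp add: mult.assoc[symmetric])
  show "(t * z * t * xi) * (t * z * t * xi) = t * z * t * xi"
    by (simp add: mult.assoc xtzY ztzY)
  have "(t * z * t * xi) * (1 - f) = t * (z * (t * (xi * (1 - f))))" by (simp add: mult.assoc)
  also have "\<dots> = t * z" using zdef ztzY[of 1] by simp
  finally show "(t * z * t * xi) * (1 - f) = t * z" .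
  show "z * (t * z) = z" using ztz by (simp add: mult.assoc)
  show "(t * z) * (t * z) = t * z" using ztzY[of 1] by (simp add: mult.assoc)
  show "f * (t * z) = 0" using ft by (simp add: mult.assoc[symmetric])
qed


context
  fixes U :: "'a::ring_1 set set"
  assumes lh: "linear_hausdorff U"
begin

lemma V_li: "V \<in> U \<Longrightarrow> left_ideal V"
  using lh unfolding linear_hausdorff_def by blast

lemma V0: "V \<in> U \<Longrightarrow> 0 \<in> V"
  using V_li unfolding left_ideal_def by blast

lemma Vdiff: "V \<in> U \<Longrightarrow> a \<in> V \<Longrightarrow> b \<in> V \<Longrightarrow> a - b \<in> V"
  using V_li unfolding left_ideal_def by blast

lemma Vmult: "V \<in> U \<Longrightarrow> a \<in> V \<Longrightarrow> r * a \<in> V"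
  using V_li unfolding left_ideal_def by blast

lemma Vneg: "V \<in> U \<Longrightarrow> a \<in> V \<Longrightarrow> - a \<in> V"
  using Vdiff[of V 0 a] V0 by simp

lemma Vadd: "V \<in> U \<Longrightarrow> a \<in> V \<Longrightarrow> b \<in> V \<Longrightarrow> a + b \<in> V"
  using Vdiff[of V a "- b"] Vneg[of V b] by simp

lemma Vsum: "(\<And>i. i \<in> F \<Longrightarrow> f i \<in> V) \<Longrightarrow> V \<in> U \<Longrightarrow> sum f F \<in> V"
proof (induction F rule: infinite_finite_induct)
  case (infinite A) then show ?case using V0 by simp
next
  case empty then show ?case using V0 by simp
next
  case (insert a F)
  then have "f a \<in> V" "sum f F \<in> V" by auto
  then show ?case using insert(1,2) Vadd[OF insert.prems(2)] by simp
qed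

lemma Vright: "V \<in> U \<Longrightarrow> \<exists>W\<in>U. \<forall>w\<in>W. w * c \<in> V"
proof -
  assume V: "V \<in> U"
  have "\<forall>V\<in>U. \<forall>x. \<exists>W\<in>U. (\<lambda>w. w * x) ` W \<subseteq> V" using lh unfolding linear_hausdorff_def by (elim conjE)
  then obtain W where "W \<in> U" "(\<lambda>w. w * c) ` W \<subseteq> V" using V by blast
  then show ?thesis by blast
qed

lemma zero_unique: "(\<And>V. V \<in> U \<Longrightarrow> a \<in> V) \<Longrightarrow> a = 0"
proof -
  assume A: "\<And>V. V \<in> U \<Longrightarrow> a \<in> V"
  have "\<Inter> U = {0}" using lh unfolding linear_hausdorff_def by (elim conjE)
  moreover have "a \<in> \<Inter> U" using A by (rule InterI)
  ultimately show "a = 0" by simp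
qed

lemma sums_unique:
  assumes "sums_to U x I r" "sums_to U x I s" shows "r = s"
proof -
  have "r - s \<in> V" if V: "V \<in> U" for V
  proof -
    obtain F1 where F1: "finite F1" "F1 \<subseteq> I" "\<And>F. finite F \<Longrightarrow> F1 \<subseteq> F \<Longrightarrow> F \<subseteq> I \<Longrightarrow> sum x F - r \<in> V"
      using sums_toD[OF assms(1) V] by blast
    obtain F2 where F2: "finite F2" "F2 \<subseteq> I" "\<And>F. finite F \<Longrightarrow> F2 \<subseteq> F \<Longrightarrow> F \<subseteq> I \<Longrightarrow> sum x F - s \<in> V"
      using sums_toD[OF assms(2) V] by blast
    have fin: "finite (F1 \<union> F2)" and sub: "F1 \<union> F2 \<subseteq> I" using F1 F2 by auto
    have a: "sum x (F1 \<union> F2) - r \<in> V" using F1(3)[OF fin _ sub] by simp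
    have b: "sum x (F1 \<union> F2) - s \<in> V" using F2(3)[OF fin _ sub] by simp
    have "(sum x (F1 \<union> F2) - s) - (sum x (F1 \<union> F2) - r) \<in> V" using Vdiff[OF V b a] .
    then show ?thesis by simp
  qed
  then have "r - s = 0" using zero_unique by blast
  then show ?thesis by simp
qed

lemma tsum_eq: "sums_to U f A s \<Longrightarrow> tsum U f A = s"
  unfolding tsum_def using sums_unique by blast

lemma tsum_sums: "summable_fam U f A \<Longrightarrow> sums_to U f A (tsum U f A)"
  unfolding summable_fam_def using tsum_eq by metis

lemma sums_mult_left:
  assumes "sums_to U x I r" shows "sums_to U (\<lambda>i. c * x i) I (c * r)"
proof (rule sums_toI)
  fix V assume V: "V \<in> U"
  obtain F' where F': "finite F'" "F' \<subseteq> I" "\<And>F. finite F \<Longrightarrow> F' \<subseteq> F \<Longrightarrow> F \<subseteq> I \<Longrightarrow> sum x F - r \<in> V"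
    using sums_toD[OF assms V] by blast
  have e: "sum (\<lambda>i. c * x i) F - c * r = c * (sum x F - r)" for F
    by (simp add: sum_distrib_left right_diff_distrib)
  show "\<exists>F'. finite F' \<and> F' \<subseteq> I \<and> (\<forall>F. finite F \<and> F' \<subseteq> F \<and> F \<subseteq> I \<longrightarrow> sum (\<lambda>i. c * x i) F - c * r \<in> V)"
  proof (rule exI[of _ F'], intro conjI allI impI)
    fix F assume "finite F \<and> F' \<subseteq> F \<and> F \<subseteq> I"
    then have "sum x F - r \<in> V" using F'(3) by blast
    then show "sum (\<lambda>i. c * x i) F - c * r \<in> V" unfolding e using Vmult[OF V] by blast
  qed (use F' in auto)
qed

lemma sums_mult_right:
  assumes "sums_to U x I r" shows "sums_to U (\<lambda>i. x i * c) I (r * c)"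
proof (rule sums_toI)
  fix V assume V: "V \<in> U"
  then obtain W where W: "W \<in> U" "\<forall>w\<in>W. w * c \<in> V" using Vright by blast
  obtain F' where F': "finite F'" "F' \<subseteq> I" "\<And>F. finite F \<Longrightarrow> F' \<subseteq> F \<Longrightarrow> F \<subseteq> I \<Longrightarrow> sum x F - r \<in> W"
    using sums_toD[OF assms W(1)] by blast
  have e: "sum (\<lambda>i. x i * c) F - r * c = (sum x F - r) * c" for F
    by (simp add: sum_distrib_right left_diff_distrib)
  show "\<exists>F'. finite F' \<and> F' \<subseteq> I \<and> (\<forall>F. finite F \<and> F' \<subseteq> F \<and> F \<subseteq> I \<longrightarrow> sum (\<lambda>i. x i * c) F - r * c \<in> V)"
  proof (rule exI[of _ F'], intro conjI allI impI)
    fix F assume "finite F \<and> F' \<subseteq> F \<and> F \<subseteq> I"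
    then have "sum x F - r \<in> W" using F'(3) by blast
    then show "sum (\<lambda>i. x i * c) F - r * c \<in> V" unfolding e using W(2) by blast
  qed (use F' in auto)
qed

lemma sums_add:
  assumes "sums_to U x I a" "sums_to U y I b"
  shows "sums_to U (\<lambda>i. x i + y i) I (a + b)"
proof (rule sums_toI)
  fix V assume V: "V \<in> U"
  obtain F1 where F1: "finite F1" "F1 \<subseteq> I" "\<And>F. finite F \<Longrightarrow> F1 \<subseteq> F \<Longrightarrow> F \<subseteq> I \<Longrightarrow> sum x F - a \<in> V"
    using sums_toD[OF assms(1) V] by blast
  obtain F2 where F2: "finite F2" "F2 \<subseteq> I" "\<And>F. finite F \<Longrightarrow> F2 \<subseteq> F \<Longrightarrow> F \<subseteq> I \<Longrightarrow> sum y F - b \<in> V"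
    using sums_toD[OF assms(2) V] by blast
  have e: "sum (\<lambda>i. x i + y i) F - (a + b) = (sum x F - a) + (sum y F - b)" for F
    by (simp add: sum.distrib algebra_simps)
  show "\<exists>F'. finite F' \<and> F' \<subseteq> I \<and> (\<forall>F. finite F \<and> F' \<subseteq> F \<and> F \<subseteq> I \<longrightarrow> sum (\<lambda>i. x i + y i) F - (a + b) \<in> V)"
  proof (rule exI[of _ "F1 \<union> F2"], intro conjI allI impI)
    fix F assume F: "finite F \<and> F1 \<union> F2 \<subseteq> F \<and> F \<subseteq> I"
    then have "sum x F - a \<in> V" "sum y F - b \<in> V" using F1(3) F2(3) by auto
    then show "sum (\<lambda>i. x i + y i) F - (a + b) \<in> V" unfolding e using Vadd[OF V] by blast
  qed (use F1 F2 in auto)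
qed

lemma sums_finite:
  assumes "finite I" shows "sums_to U x I (sum x I)"
proof (rule sums_toI)
  fix V assume "V \<in> U"
  then show "\<exists>F'. finite F' \<and> F' \<subseteq> I \<and> (\<forall>F. finite F \<and> F' \<subseteq> F \<and> F \<subseteq> I \<longrightarrow> sum x F - sum x I \<in> V)"
    using assms V0 by (intro exI[of _ I]) auto
qed

lemma sums_empty: "sums_to U x {} s \<Longrightarrow> s = 0"
  using sums_finite[of "{}" x] sums_unique by fastforce

lemma sums_small:
  assumes "sums_to U x I r" "V \<in> U"
  shows "\<exists>F'. finite F' \<and> F' \<subseteq> I \<and> (\<forall>i\<in>I - F'. x i \<in> V)"
proof -
  obtain F' where F': "finite F'" "F' \<subseteq> I" "\<And>F. finite F \<Longrightarrow> F' \<subseteq> F \<Longrightarrow> F \<subseteq> I \<Longrightarrow> sum x F - r \<in> V"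
    using sums_toD[OF assms] by blast
  have "x i \<in> V" if i: "i \<in> I - F'" for i
  proof -
    have a: "sum x (insert i F') - r \<in> V" using F'(1,2) i by (intro F'(3)) auto
    have b: "sum x F' - r \<in> V" using F'(1,2) by (intro F'(3)) auto
    have "sum x (insert i F') = x i + sum x F'" using F' i by simp
    then have "x i = (sum x (insert i F') - r) - (sum x F' - r)" by simp
    then show ?thesis using Vdiff[OF assms(2) a b] by simp
  qed
  then show ?thesis using F' by blast
qed

lemma sums_in_V:
  assumes "sums_to U x K s" "V \<in> U" "\<And>k. k \<in> K \<Longrightarrow> x k \<in> V"
  shows "s \<in> V"
proof -
  obtain F' where F': "finite F'" "F' \<subseteq> K" "\<And>F. finite F \<Longrightarrow> F' \<subseteq> F \<Longrightarrow> F \<subseteq> K \<Longrightarrow> sum x F - s \<in> V"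
    using sums_toD[OF assms(1,2)] by blast
  have a: "sum x F' - s \<in> V" using F'(1,2) by (intro F'(3)) auto
  have b: "sum x F' \<in> V" using Vsum[of F' x V] assms(2,3) F' by blast
  have "sum x F' - (sum x F' - s) \<in> V" using Vdiff[OF assms(2) b a] .
  then show ?thesis by simp
qed

lemma sums_insert:
  assumes "sums_to U x J a" "i \<notin> J"
  shows "sums_to U x (insert i J) (a + x i)"
proof (rule sums_toI)
  fix V assume V: "V \<in> U"
  obtain F' where F': "finite F'" "F' \<subseteq> J" "\<And>F. finite F \<Longrightarrow> F' \<subseteq> F \<Longrightarrow> F \<subseteq> J \<Longrightarrow> sum x F - a \<in> V"
    using sums_toD[OF assms(1) V] by blast
  show "\<exists>F'. finite F' \<and> F' \<subseteq> insert i J \<and> (\<forall>F. finite F \<and> F' \<subseteq> F \<and> F \<subseteq> insert i J \<longrightarrow> sum x F - (a + x i) \<in> V)"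
  proof (rule exI[of _ "insert i F'"], intro conjI allI impI)
    show "finite (insert i F')" using F' by simp
    show "insert i F' \<subseteq> insert i J" using F' by auto
    fix F assume F: "finite F \<and> insert i F' \<subseteq> F \<and> F \<subseteq> insert i J"
    have "finite (F - {i})" "F' \<subseteq> F - {i}" "F - {i} \<subseteq> J" using F F'(2) assms(2) by auto
    then have 1: "sum x (F - {i}) - a \<in> V" using F'(3) by blast
    have "sum x F = x i + sum x (F - {i})" using F by (simp add: sum.remove)
    then show "sum x F - (a + x i) \<in> V" using 1 by (simp add: algebra_simps)
  qed
qed

lemma sums_split:
  assumes "sums_to U f A a" "B \<subseteq> A" "sums_to U f B b" "sums_to U f (A - B) c"
  shows "a = b + c"
proof -
  have 1: "sums_to U (\<lambda>k. if k \<in> B then f k else 0) A b"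
  proof -
    have "sums_to U (\<lambda>k. if k \<in> B then f k else 0) B b \<longleftrightarrow> sums_to U f B b" by (rule sums_cong) simp
    then have "sums_to U (\<lambda>k. if k \<in> B then f k else 0) B b" using assms(3) by simp
    then show ?thesis using sums_zero_ext[of B A "\<lambda>k. if k \<in> B then f k else 0"] assms(2) by simp
  qed
  have 2: "sums_to U (\<lambda>k. if k \<in> A - B then f k else 0) A c"
  proof -
    have "sums_to U (\<lambda>k. if k \<in> A - B then f k else 0) (A - B) c \<longleftrightarrow> sums_to U f (A - B) c" by (rule sums_cong) simp
    then have "sums_to U (\<lambda>k. if k \<in> A - B then f k else 0) (A - B) c" using assms(4) by simp
    then show ?thesis using sums_zero_ext[of "A - B" A "\<lambda>k. if k \<in> A - B then f k else 0"] by auto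
  qed
  have "sums_to U (\<lambda>k. (if k \<in> B then f k else 0) + (if k \<in> A - B then f k else 0)) A (b + c)"
    using sums_add[OF 1 2] .
  moreover have "sums_to U (\<lambda>k. (if k \<in> B then f k else 0) + (if k \<in> A - B then f k else 0)) A (b + c)
      \<longleftrightarrow> sums_to U f A (b + c)"
    by (rule sums_cong) auto
  ultimately have "sums_to U f A (b + c)" by simp
  then show ?thesis using sums_unique assms(1) by blast
qed

lemma closed_principal:
  assumes "sums_to U t K s" "\<And>k. k \<in> K \<Longrightarrow> \<exists>a. t k = a * u" "u = u * w * u"
  shows "\<exists>a. s = a * u"
proof -
  define f where "f = w * u"
  have tk: "t k * (1 - f) = 0" if k: "k \<in> K" for k
  proof -
    obtain a where "t k = a * u" using assms(2)[OF k] by blast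
    then have "t k * (1 - f) = a * u - a * (u * w * u)"
      unfolding f_def by (simp add: right_diff_distrib mult.assoc)
    then show ?thesis using assms(3) by simp
  qed
  have "sums_to U (\<lambda>k. t k * (1 - f)) K (s * (1 - f))" using sums_mult_right[OF assms(1)] .
  moreover have "sums_to U (\<lambda>k. t k * (1 - f)) K (s * (1 - f)) \<longleftrightarrow> sums_to U (\<lambda>k. 0) K (s * (1 - f))"
    by (rule sums_cong) (simp add: tk)
  ultimately have "sums_to U (\<lambda>k. 0) K (s * (1 - f))" by simp
  moreover have "sums_to U (\<lambda>k. 0) K 0" using V0 by (intro sums_toI exI[of _ "{}"]) auto
  ultimately have "s * (1 - f) = 0" using sums_unique by blast
  then have "s = s * f" by (simp add: right_diff_distrib)
  then have "s = (s * w) * u" unfolding f_def by (simp add: mult.assoc)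
  then show ?thesis by blast
qed


lemma sub_summable:
  fixes x :: "'i \<Rightarrow> 'a" and g :: "'i \<Rightarrow> 'a"
  assumes nice: "nice_idx U TYPE('i)" and sx: "sums_to U x I s0" and AI: "A \<subseteq> I"
    and g: "\<And>k. k \<in> A \<Longrightarrow> \<exists>c. g k = c * x k"
  shows "summable_fam U g A"
proof -
  define c where "c k = (SOME c. g k = c * x k)" for k
  have gk: "g k = c k * x k" if "k \<in> A" for k
    unfolding c_def using g[OF that] by (rule someI_ex)
  have "summable_fam U x I" unfolding summable_fam_def using sx by (rule exI)
  moreover have N: "\<forall>(I::'i set) x rs. summable_fam U x I \<longrightarrow> summable_fam U (\<lambda>i. rs i * x i) I"
    using nice unfolding nice_idx_def by (elim conjE)
  ultimately have "summable_fam U (\<lambda>k. (if k \<in> A then c k else 0) * x k) I"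
    using N[rule_format, of x I "\<lambda>k. if k \<in> A then c k else 0"] by simp
  then have "\<exists>s. sums_to U (\<lambda>k. (if k \<in> A then c k else 0) * x k) I s"
    unfolding summable_fam_def .
  then obtain s where s: "sums_to U (\<lambda>k. (if k \<in> A then c k else 0) * x k) I s"
    by (elim exE)
  have "sums_to U (\<lambda>k. (if k \<in> A then c k else 0) * x k) A s"
    using s sums_zero_ext[of A I "\<lambda>k. (if k \<in> A then c k else 0) * x k" U s] AI by simp
  moreover have "sums_to U (\<lambda>k. (if k \<in> A then c k else 0) * x k) A s \<longleftrightarrow> sums_to U g A s"
    by (rule sums_cong) (simp add: gk)
  ultimately have "sums_to U g A s" by simp
  then show ?thesis unfolding summable_fam_def by (rule exI)
qed

lemma fof_props:
  fixes u :: 'a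
  assumes reg: "\<And>a::'a. \<exists>y. a = a * y * a"
  shows "u * fof u = u" "fof u * fof u = fof u" "fof u = (SOME w. u = u * w * u) * u"
proof -
  define w0 where "w0 = (SOME w. u = u * w * u)"
  have "u = u * w0 * u" unfolding w0_def by (rule someI_ex[OF reg[of u]])
  then have w0: "u * (w0 * u) = u" by (simp add: mult.assoc)
  have fd: "fof u = w0 * u" unfolding fof_def w0_def ..
  show "u * fof u = u" unfolding fd using w0 .
  have "fof u * fof u = w0 * (u * (w0 * u))" unfolding fd by (simp add: mult.assoc)
  then show "fof u * fof u = fof u" unfolding w0 fd .
  show "fof u = (SOME w. u = u * w * u) * u" unfolding fof_def ..
qed

lemma hstep_props:
  fixes u xi :: 'a
  assumes reg: "\<And>a::'a. \<exists>y. a = a * y * a"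
  shows "fof u * hstep u xi = 0"
    and "hstep u xi * hstep u xi = hstep u xi"
    and "hstep u xi * (1 - fof u) = tauof u xi * zof u xi"
    and "zof u xi * (tauof u xi * zof u xi) = zof u xi"
    and "zof u xi = xi * (1 - fof u)"
    and "hstep u xi = (tauof u xi * zof u xi * tauof u xi) * xi"
proof -
  define z where "z = zof u xi"
  define w where "w = (SOME w. z = z * w * z)"
  have "z = z * w * z" unfolding w_def by (rule someI_ex[OF reg[of z]])
  then have zw: "z * w * z = z" by simp
  have td: "tauof u xi = (1 - fof u) * w" unfolding tauof_def w_def z_def ..
  have zd: "z = xi * (1 - fof u)" unfolding z_def zof_def ..
  have ff: "fof u * fof u = fof u" using fof_props[OF reg] by blast
  note A = hstep_alg[OF ff zd zw td]
  show "fof u * hstep u xi = 0" unfolding hstep_def z_def[symmetric] using A(1) .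
  show "hstep u xi * hstep u xi = hstep u xi" unfolding hstep_def z_def[symmetric] using A(2) .
  show "hstep u xi * (1 - fof u) = tauof u xi * zof u xi" unfolding hstep_def z_def[symmetric] using A(3) .
  show "zof u xi * (tauof u xi * zof u xi) = zof u xi" unfolding z_def[symmetric] using A(4) .
  show "zof u xi = xi * (1 - fof u)" unfolding zof_def ..
  show "hstep u xi = (tauof u xi * zof u xi * tauof u xi) * xi" unfolding hstep_def ..
qed


context
  fixes I :: "'i set" and x :: "'i \<Rightarrow> 'a" and R :: "('i \<times> 'i) set" and H :: "'i \<Rightarrow> 'a"
  assumes nice: "nice_idx U TYPE('i)"
    and reg: "\<And>a::'a. \<exists>y. a = a * y * a"
    and sum1: "sums_to U x I 1"
    and wfR: "wf R"
    and totR: "\<And>a b. a \<noteq> b \<Longrightarrow> (a, b) \<in> R \<or> (b, a) \<in> R"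
    and transR: "trans R"
    and Hdef: "\<And>i. H i = (if i \<in> I then hstep (tsum U H {k\<in>I. (k, i) \<in> R}) (x i) else 0)"
begin

lemma Hc: "\<exists>c. H i = c * x i"
proof (cases "i \<in> I")
  case True
  define u where "u = tsum U H {k\<in>I. (k, i) \<in> R}"
  have "H i = hstep u (x i)" using Hdef True unfolding u_def by simp
  also have "\<dots> = (tauof u (x i) * zof u (x i) * tauof u (x i)) * x i" by (rule hstep_props(6)[OF reg])
  finally show ?thesis by (rule exI)
next
  case False
  then have "H i = 0 * x i" using Hdef[of i] by simp
  then show ?thesis by (rule exI)
qed

lemma Hidem: "H i * H i = H i"
proof (cases "i \<in> I")
  case True
  then have "H i = hstep (tsum U H {k\<in>I. (k, i) \<in> R}) (x i)" using Hdef by simp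
  then show ?thesis using hstep_props(2)[OF reg] by simp
next
  case False
  then show ?thesis using Hdef[of i] by simp
qed

lemma sumH: "A \<subseteq> I \<Longrightarrow> sums_to U H A (tsum U H A)"
  by (rule tsum_sums, rule sub_summable[OF nice sum1]) (use Hc in auto)

lemma sumcx: "A \<subseteq> I \<Longrightarrow> \<exists>s. sums_to U (\<lambda>k. c k * x k) A s"
proof -
  assume "A \<subseteq> I"
  then have "summable_fam U (\<lambda>k. c k * x k) A" by (rule sub_summable[OF nice sum1]) blast
  then show ?thesis unfolding summable_fam_def .
qed

lemma irrR: "(a, a) \<notin> R" using wfR by simp

lemma asymR: "(a, b) \<in> R \<Longrightarrow> (b, a) \<notin> R" using wf_not_sym[OF wfR] .

lemma tri_span:
  assumes J: "J \<subseteq> I"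
    and tri: "\<And>k k'. k \<in> J \<Longrightarrow> k' \<in> J \<Longrightarrow> (k, k') \<in> R \<Longrightarrow> H k * H k' = 0"
  shows "k \<in> J \<Longrightarrow> \<exists>a. H k = a * tsum U H J"
proof (induction k rule: wf_induct_rule[OF wfR])
  case (1 k)
  define u where "u = tsum U H J"
  obtain w0 where w0: "u = u * w0 * u" using reg by blast
  have sJ: "sums_to U H J u" unfolding u_def using sumH[OF J] .
  define Q where "Q = {j \<in> J. (j, k) \<in> R}"
  have kQ: "k \<notin> Q" unfolding Q_def using irrR by blast
  have QJ: "insert k Q \<subseteq> J" using 1(2) unfolding Q_def by blast
  have s1: "sums_to U (\<lambda>j. H k * H j) J (H k * u)" using sums_mult_left[OF sJ] .
  have z: "H k * H j = 0" if "j \<in> J - insert k Q" for j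
  proof -
    have "j \<noteq> k" "(j, k) \<notin> R" "j \<in> J" using that unfolding Q_def by auto
    then have "(k, j) \<in> R" using totR by blast
    then show ?thesis using tri[OF 1(2) \<open>j \<in> J\<close>] by simp
  qed
  have s2: "sums_to U (\<lambda>j. H k * H j) (insert k Q) (H k * u)"
    using s1 sums_zero_ext[OF QJ, of "\<lambda>j. H k * H j" U "H k * u"] z by blast
  have QI: "Q \<subseteq> I" using J unfolding Q_def by blast
  obtain sQ where s3: "sums_to U (\<lambda>j. H k * H j) Q sQ"
  proof -
    have "summable_fam U (\<lambda>j. H k * H j) Q"
    proof (rule sub_summable[OF nice sum1 QI])
      fix j assume "j \<in> Q"
      obtain c where "H j = c * x j" using Hc by blast
      then show "\<exists>c. H k * H j = c * x j" by (metis mult.assoc)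
    qed
    then show ?thesis using that unfolding summable_fam_def by blast
  qed
  have s4: "sums_to U (\<lambda>j. H k * H j) (insert k Q) (sQ + H k * H k)" using sums_insert[OF s3 kQ] .
  have eq: "H k * u = sQ + H k" using sums_unique[OF s2 s4] Hidem by simp
  have "\<exists>a. sQ = a * u"
  proof (rule closed_principal[OF s3 _ w0])
    fix j assume jQ: "j \<in> Q"
    then have "(j, k) \<in> R" "j \<in> J" unfolding Q_def by auto
    then obtain a where "H j = a * u" using 1(1) unfolding u_def by blast
    then show "\<exists>a. H k * H j = a * u" by (metis mult.assoc)
  qed
  then obtain a where a: "sQ = a * u" by blast
  have "H k = H k * u - sQ" using eq by simp
  also have "\<dots> = (H k - a) * u" using a by (simp add: left_diff_distrib)
  finally show ?case unfolding u_def by blast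
qed

lemma Htri: "i \<in> I \<Longrightarrow> j \<in> I \<Longrightarrow> (i, j) \<in> R \<Longrightarrow> H i * H j = 0"
proof (induction j arbitrary: i rule: wf_induct_rule[OF wfR])
  case (1 j)
  define J where "J = {k\<in>I. (k, j) \<in> R}"
  define u where "u = tsum U H J"
  have JI: "J \<subseteq> I" unfolding J_def by blast
  have tri: "H k * H k' = 0" if "k \<in> J" "k' \<in> J" "(k, k') \<in> R" for k k'
    using 1(1)[of k' k] that unfolding J_def by blast
  have iJ: "i \<in> J" unfolding J_def using 1 by blast
  obtain a where a: "H i = a * u" using tri_span[OF JI tri iJ] unfolding u_def by blast
  have hj: "H j = hstep u (x j)" using Hdef[of j] 1(3) unfolding u_def J_def by simp
  have "H i * fof u = H i" unfolding a using fof_props(1)[OF reg, of u] by (simp add: mult.assoc)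
  then have "H i * H j = H i * (fof u * H j)" by (metis mult.assoc)
  also have "\<dots> = 0" unfolding hj using hstep_props(1)[OF reg] by simp
  finally show ?case .
qed

definition Inv :: "'i set \<Rightarrow> bool" where
  "Inv J \<longleftrightarrow> (\<forall>V\<in>U. \<exists>y c s. sums_to U (\<lambda>k. c k * x k) (I - J) s \<and> y * tsum U H J + s - 1 \<in> V)"


lemma InvD:
  assumes "Inv J" "V \<in> U"
  obtains y c s where "sums_to U (\<lambda>k. c k * x k) (I - J) s" "y * tsum U H J + s - 1 \<in> V"
proof -
  have "\<exists>y c s. sums_to U (\<lambda>k. c k * x k) (I - J) s \<and> y * tsum U H J + s - 1 \<in> V"
    using assms(1) unfolding Inv_def using assms(2) by (rule bspec)
  then obtain y c s where "sums_to U (\<lambda>k. c k * x k) (I - J) s" "y * tsum U H J + s - 1 \<in> V"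
    by (elim exE conjE)
  then show ?thesis by (rule that)
qed

lemma Inv_empty: "Inv {}"
  unfolding Inv_def
proof (intro ballI)
  fix V assume V: "V \<in> U"
  have "sums_to U (\<lambda>k. 1 * x k) (I - {}) 1" using sum1 by simp
  moreover have "0 * tsum U H {} + 1 - 1 \<in> V" using V0[OF V] by simp
  ultimately show "\<exists>y c s. sums_to U (\<lambda>k. c k * x k) (I - {}) s \<and> y * tsum U H {} + s - 1 \<in> V"
    by (intro exI[of _ 0] exI[of _ "\<lambda>k. 1"] exI[of _ 1] conjI)
qed

lemma Inv_lim:
  assumes J: "J \<subseteq> I"
    and cov: "\<And>F. finite F \<Longrightarrow> F \<subseteq> J \<Longrightarrow> \<exists>J'. F \<subseteq> J' \<and> J' \<subseteq> J \<and> Inv J'"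
  shows "Inv J"
  unfolding Inv_def
proof (intro ballI)
  fix V assume V: "V \<in> U"
  have sJ: "sums_to U H J (tsum U H J)" using sumH[OF J] .
  have "\<exists>F1. finite F1 \<and> F1 \<subseteq> I \<and> (\<forall>i\<in>I - F1. x i \<in> V)" using sums_small[OF sum1 V] .
  then obtain F1 where F1: "finite F1" "F1 \<subseteq> I" "\<forall>i\<in>I - F1. x i \<in> V" by (elim exE conjE)
  have "\<exists>F2. finite F2 \<and> F2 \<subseteq> J \<and> (\<forall>i\<in>J - F2. H i \<in> V)" using sums_small[OF sJ V] .
  then obtain F2 where F2: "finite F2" "F2 \<subseteq> J" "\<forall>i\<in>J - F2. H i \<in> V" by (elim exE conjE)
  define F where "F = (F1 \<inter> J) \<union> F2"
  have "finite F" "F \<subseteq> J" unfolding F_def using F1(1) F2(1,2) by auto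
  then have "\<exists>J'. F \<subseteq> J' \<and> J' \<subseteq> J \<and> Inv J'" by (rule cov)
  then obtain J' where J': "F \<subseteq> J'" "J' \<subseteq> J" "Inv J'" by (elim exE conjE)
  obtain y c s' where s': "sums_to U (\<lambda>k. c k * x k) (I - J') s'" and e': "y * tsum U H J' + s' - 1 \<in> V"
    using InvD[OF J'(3) V] by blast
  have J'I: "J' \<subseteq> I" using J'(2) J by blast
  have sJ': "sums_to U H J' (tsum U H J')" using sumH[OF J'I] .
  have DI: "J - J' \<subseteq> I" using J by blast
  have sD: "sums_to U H (J - J') (tsum U H (J - J'))" using sumH[OF DI] .
  have tV: "tsum U H (J - J') \<in> V"
  proof (rule sums_in_V[OF sD V])
    fix k assume "k \<in> J - J'"
    then have "k \<in> J - F2" using J'(1) unfolding F_def by blast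
    then show "H k \<in> V" using F2(3) by blast
  qed
  have split1: "tsum U H J = tsum U H J' + tsum U H (J - J')" using sums_split[OF sJ J'(2) sJ' sD] .
  obtain sa where sa: "sums_to U (\<lambda>k. c k * x k) (J - J') sa" using sumcx[OF DI] by blast
  have IJ: "I - J \<subseteq> I" by blast
  obtain sb where sb: "sums_to U (\<lambda>k. c k * x k) (I - J) sb" using sumcx[OF IJ] by blast
  have saV: "sa \<in> V"
  proof (rule sums_in_V[OF sa V])
    fix k assume k: "k \<in> J - J'"
    then have "k \<in> I - F1" using J J'(1) unfolding F_def by blast
    then have "x k \<in> V" using F1(3) by blast
    then show "c k * x k \<in> V" using Vmult[OF V] by blast
  qed
  have sub2: "J - J' \<subseteq> I - J'" using J by blast
  have eqd: "(I - J') - (J - J') = I - J" using J J'(2) by blast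
  have sb': "sums_to U (\<lambda>k. c k * x k) ((I - J') - (J - J')) sb" unfolding eqd using sb .
  have split2: "s' = sa + sb" using sums_split[OF s' sub2 sa sb'] .
  have "y * tsum U H J + sb - 1 = (y * tsum U H J' + s' - 1) + y * tsum U H (J - J') - sa"
    unfolding split1 split2 by (simp add: algebra_simps)
  also have "\<dots> \<in> V" using Vdiff[OF V Vadd[OF V e' Vmult[OF V tV]] saV] .
  finally have "y * tsum U H J + sb - 1 \<in> V" .
  with sb show "\<exists>y c s. sums_to U (\<lambda>k. c k * x k) (I - J) s \<and> y * tsum U H J + s - 1 \<in> V"
    by (intro exI[of _ y] exI[of _ c] exI[of _ sb] conjI)
qed

lemma Inv_step:
  assumes i: "i \<in> I" and inv: "Inv {k\<in>I. (k, i) \<in> R}"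
  shows "Inv (insert i {k\<in>I. (k, i) \<in> R})"
proof -
  define J where "J = {k\<in>I. (k, i) \<in> R}"
  define J2 where "J2 = insert i J"
  define u where "u = tsum U H J"
  define f where "f = fof u"
  define h where "h = H i"
  define z where "z = zof u (x i)"
  define g where "g = tauof u (x i) * zof u (x i)"
  have hd: "h = hstep u (x i)" unfolding h_def u_def J_def using Hdef[of i] i by simp
  have zg: "z * g = z" unfolding z_def g_def using hstep_props(4)[OF reg] .
  have hg: "h * (1 - f) = g" unfolding hd f_def g_def using hstep_props(3)[OF reg] .
  have zd: "z = x i * (1 - f)" unfolding z_def f_def using hstep_props(5)[OF reg] .
  have uf: "u * f = u" unfolding f_def using fof_props(1)[OF reg] .
  have iJ: "i \<notin> J" unfolding J_def using irrR by blast
  have JI: "J \<subseteq> I" unfolding J_def by blast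
  have J2I: "J2 \<subseteq> I" unfolding J2_def using JI i by blast
  have sJ: "sums_to U H J u" unfolding u_def using sumH[OF JI] .
  have sJ2: "sums_to U H J2 (u + h)" unfolding J2_def h_def using sums_insert[OF sJ iJ] .
  define u' where "u' = tsum U H J2"
  have u'eq: "u' = u + h" unfolding u'_def using tsum_eq[OF sJ2] .
  have tri2: "H k * H k' = 0" if "k \<in> J2" "k' \<in> J2" "(k, k') \<in> R" for k k'
    using Htri that J2I by blast
  have span: "\<exists>a. H k = a * u'" if "k \<in> J2" for k
    unfolding u'_def using tri_span[OF J2I tri2 that] .
  obtain w' where w': "u' = u' * w' * u'" using reg by blast
  have "\<exists>a. u = a * u'"
  proof (rule closed_principal[OF sJ _ w'])
    fix k assume "k \<in> J" then show "\<exists>a. H k = a * u'" using span unfolding J2_def by blast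
  qed
  then obtain a0 where a0: "u = a0 * u'" by blast
  obtain a1 where a1: "h = a1 * u'" using span[of i] unfolding J2_def h_def by blast
  have "f = (SOME w. u = u * w * u) * u" unfolding f_def using fof_props(3)[OF reg] .
  then have a2: "f = ((SOME w. u = u * w * u) * a0) * u'" using a0 by (simp add: mult.assoc)
  define a2 where "a2 = (SOME w. u = u * w * u) * a0"
  have fa2: "f = a2 * u'" using a2 unfolding a2_def .
  show ?thesis
    unfolding J_def[symmetric] J2_def[symmetric] Inv_def u'_def[symmetric]
  proof (intro ballI)
    fix V assume V: "V \<in> U"
    obtain W where W: "W \<in> U" "\<forall>w\<in>W. w * (1 - f) \<in> V" using Vright[OF V] by blast
    obtain y c s where s: "sums_to U (\<lambda>k. c k * x k) (I - J) s" and e: "y * u + s - 1 \<in> W"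
      using InvD[OF inv[folded J_def] W(1)] unfolding u_def by blast
    have KI: "I - J2 \<subseteq> I" by blast
    obtain sK where sK: "sums_to U (\<lambda>k. c k * x k) (I - J2) sK" using sumcx[OF KI] by blast
    have iK: "i \<notin> I - J2" unfolding J2_def by blast
    have sK2: "sums_to U (\<lambda>k. c k * x k) (insert i (I - J2)) (sK + c i * x i)"
      using sums_insert[OF sK iK] .
    have ins: "insert i (I - J2) = I - J" unfolding J2_def using i iJ by blast
    have seq: "s = sK + c i * x i" using sums_unique[OF s sK2[unfolded ins]] .
    have eV: "(y * u + s - 1) * (1 - f) \<in> V" using W(2) e by blast
    define ciz where "ciz = c i * z"
    define y' where "y' = ciz * a1 + (1 - sK - ciz * h) * a2"
    have u1f: "u * (1 - f) = 0" using uf by (simp add: right_diff_distrib)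
    have cz: "ciz = ciz * h - ciz * h * f"
    proof -
      have "ciz = ciz * g" unfolding ciz_def using zg by (simp add: mult.assoc)
      also have "\<dots> = ciz * (h * (1 - f))" using hg by simp
      also have "\<dots> = ciz * h - ciz * h * f" by (simp add: right_diff_distrib mult.assoc)
      finally show ?thesis .
    qed
    have "(y * u + s - 1) * (1 - f) = y * (u * (1 - f)) + sK - sK * f + c i * (x i * (1 - f)) - 1 + f"
      unfolding seq by (simp add: algebra_simps)
    also have "\<dots> = sK - sK * f + ciz - 1 + f" unfolding u1f zd[symmetric] ciz_def by simp
    also have "\<dots> = sK - sK * f + (ciz * h - ciz * h * f) - 1 + f" using cz by simp
    also have "\<dots> = y' * u' + sK - 1"
      unfolding y'_def by (simp add: algebra_simps a1[symmetric] fa2[symmetric])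
    finally have "y' * u' + sK - 1 \<in> V" using eV by simp
    with sK show "\<exists>y c s. sums_to U (\<lambda>k. c k * x k) (I - J2) s \<and> y * u' + s - 1 \<in> V"
      by (intro exI[of _ y'] exI[of _ c] exI[of _ sK] conjI)
  qed
qed


lemma fin_max: "finite F \<Longrightarrow> F \<noteq> {} \<Longrightarrow> \<exists>m\<in>F. \<forall>k\<in>F. k = m \<or> (k, m) \<in> R"
proof (induction F rule: finite_ne_induct)
  case (singleton a) then show ?case by simp
next
  case (insert a F)
  then obtain m where m: "m \<in> F" "\<forall>k\<in>F. k = m \<or> (k, m) \<in> R" by blast
  show ?case
  proof (cases "a = m \<or> (a, m) \<in> R")
    case True
    then show ?thesis using m by blast
  next
    case False
    then have am: "(m, a) \<in> R" using totR by blast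
    have "\<forall>k\<in>insert a F. k = a \<or> (k, a) \<in> R"
    proof
      fix k assume "k \<in> insert a F"
      then consider "k = a" | "k = m" | "(k, m) \<in> R" using m by blast
      then show "k = a \<or> (k, a) \<in> R"
      proof cases
        case 3 then show ?thesis using am transR unfolding trans_def by blast
      qed (use am in auto)
    qed
    then show ?thesis by blast
  qed
qed

lemma cov_lemma:
  assumes IH: "\<And>j. j \<in> J \<Longrightarrow> Inv (insert j {k\<in>I. (k, j) \<in> R})"
    and down: "\<And>j k. j \<in> J \<Longrightarrow> k \<in> I \<Longrightarrow> (k, j) \<in> R \<Longrightarrow> k \<in> J"
    and JI: "J \<subseteq> I" and F: "finite F" "F \<subseteq> J"
  shows "\<exists>J'. F \<subseteq> J' \<and> J' \<subseteq> J \<and> Inv J'"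
proof (cases "F = {}")
  case True
  then show ?thesis using Inv_empty by blast
next
  case False
  obtain m where m: "m \<in> F" "\<forall>k\<in>F. k = m \<or> (k, m) \<in> R" using fin_max[OF F(1) False] by blast
  have mJ: "m \<in> J" using m F by blast
  define J' where "J' = insert m {k\<in>I. (k, m) \<in> R}"
  have "Inv J'" unfolding J'_def using IH[OF mJ] .
  moreover have "J' \<subseteq> J" unfolding J'_def using down[OF mJ] mJ by blast
  moreover have "F \<subseteq> J'"
  proof
    fix k assume k: "k \<in> F"
    then have "k \<in> J" using F by blast
    then show "k \<in> J'" using JI m k unfolding J'_def by blast
  qed
  ultimately show ?thesis by blast
qed

lemma Inv_ins: "i \<in> I \<Longrightarrow> Inv (insert i {k\<in>I. (k, i) \<in> R})"
proof (induction i rule: wf_induct_rule[OF wfR])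
  case (1 i)
  define J where "J = {k\<in>I. (k, i) \<in> R}"
  have "Inv J"
  proof (rule Inv_lim)
    show "J \<subseteq> I" unfolding J_def by blast
    fix F assume F: "finite F" "F \<subseteq> J"
    show "\<exists>J'. F \<subseteq> J' \<and> J' \<subseteq> J \<and> Inv J'"
    proof (rule cov_lemma[OF _ _ _ F])
      fix j assume "j \<in> J" then show "Inv (insert j {k\<in>I. (k, j) \<in> R})"
        using 1(1) unfolding J_def by blast
    next
      fix j k assume "j \<in> J" "k \<in> I" "(k, j) \<in> R"
      then show "k \<in> J" using transR unfolding J_def trans_def by blast
    qed (auto simp: J_def)
  qed
  then show ?case using Inv_step[OF 1(2)] unfolding J_def by blast
qed

lemma Inv_I: "Inv I"
proof (rule Inv_lim)
  fix F assume F: "finite F" "F \<subseteq> I"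
  show "\<exists>J'. F \<subseteq> J' \<and> J' \<subseteq> I \<and> Inv J'"
    by (rule cov_lemma[OF _ _ _ F]) (use Inv_ins in auto)
qed simp

lemma left_inv: "\<exists>v. v * tsum U H I = 1"
proof -
  define u where "u = tsum U H I"
  define f where "f = fof u"
  have uf: "u * f = u" unfolding f_def using fof_props(1)[OF reg] .
  have u1f: "u * (1 - f) = 0" using uf by (simp add: right_diff_distrib)
  have "1 - f \<in> V" if V: "V \<in> U" for V
  proof -
    obtain W where W: "W \<in> U" "\<forall>w\<in>W. w * (1 - f) \<in> V" using Vright[OF V] by blast
    obtain y c s where s: "sums_to U (\<lambda>k. c k * x k) (I - I) s" and e: "y * u + s - 1 \<in> W"
      using InvD[OF Inv_I W(1)] unfolding u_def by blast
    have "s = 0" using s sums_empty by simp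
    then have "(y * u - 1) * (1 - f) \<in> V" using e W(2) by simp
    moreover have "(y * u - 1) * (1 - f) = - (1 - f)"
      by (simp add: left_diff_distrib mult.assoc u1f)
    ultimately have "- (1 - f) \<in> V" by simp
    then have "- (- (1 - f)) \<in> V" by (rule Vneg[OF V])
    then show ?thesis by simp
  qed
  then have "1 - f = 0" using zero_unique by blast
  then have "f = 1" by simp
  then have "(SOME w. u = u * w * u) * u = 1" using fof_props(3)[OF reg, of u] unfolding f_def by simp
  then show ?thesis unfolding u_def by blast
qed

lemma orth:
  assumes vu: "v * tsum U H I = 1" and uv: "tsum U H I * v = 1" and j: "j \<in> I"
  shows "i \<in> I \<Longrightarrow> H i * (v * H j) = (if i = j then H j else 0)"
proof (induction i rule: wf_induct_rule[OF wfR])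
  case (1 i)
  define u where "u = tsum U H I"
  define w where "w = v * H j"
  have "u * w = (tsum U H I * v) * H j" unfolding u_def w_def by (simp add: mult.assoc)
  then have uw: "u * w = H j" using uv by simp
  have sI: "sums_to U H I u" unfolding u_def using sumH[OF subset_refl] .
  have s2: "sums_to U (\<lambda>k. H i * H k * w) I (H i * H j)"
  proof -
    have "sums_to U (\<lambda>k. H i * H k * w) I (H i * u * w)"
      using sums_mult_right[OF sums_mult_left[OF sI]] .
    then show ?thesis using uw by (simp add: mult.assoc)
  qed
  define G where "G k = (if k = i then H i * w else if k = j \<and> (j, i) \<in> R then H i * H j else 0)" for k
  have pw: "H i * H k * w = G k" if k: "k \<in> I" for k
  proof (cases "k = i")
    case True then show ?thesis unfolding G_def using Hidem by simp
  next
    case False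
    then consider "(i, k) \<in> R" | "(k, i) \<in> R" using totR by blast
    then show ?thesis
    proof cases
      case 1
      then have "H i * H k = 0" using Htri 1 k \<open>i \<in> I\<close> by blast
      moreover have "\<not> (k = j \<and> (j, i) \<in> R)" using 1 asymR by blast
      then have "G k = 0" unfolding G_def using False by auto
      ultimately show ?thesis by simp
    next
      case 2
      have IHk: "H k * w = (if k = j then H j else 0)" using 1(1)[OF 2 k] unfolding w_def .
      have "H i * H k * w = H i * H k * (H k * w)" using Hidem[of k] by (metis mult.assoc)
      moreover have "H i * H j * H j = H i * H j" using Hidem[of j] by (simp add: mult.assoc)
      ultimately show ?thesis unfolding G_def IHk using False 2 by auto
    qed
  qed
  have s3: "sums_to U G I (H i * H j)"
  proof -
    have "sums_to U (\<lambda>k. H i * H k * w) I (H i * H j) \<longleftrightarrow> sums_to U G I (H i * H j)"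
      by (rule sums_cong) (rule pw)
    then show ?thesis using s2 by simp
  qed
  have SI: "{i, j} \<subseteq> I" using j 1(2) by blast
  have z: "G k = 0" if "k \<in> I - {i, j}" for k
    using that unfolding G_def by auto
  have "sums_to U G I (H i * H j) \<longleftrightarrow> sums_to U G {i, j} (H i * H j)"
    by (rule sums_zero_ext[OF SI z])
  then have s4: "sums_to U G {i, j} (H i * H j)" using s3 by simp
  have s5: "sums_to U G {i, j} (sum G {i, j})" by (rule sums_finite) simp
  have eq: "H i * H j = sum G {i, j}" using sums_unique[OF s4 s5] .
  show ?case
  proof (cases "i = j")
    case True
    then have "H i * H j = H i * w" using eq unfolding G_def by simp
    then show ?thesis using True Hidem unfolding w_def by simp
  next
    case False
    then have eq2: "H i * H j = H i * w + (if (j, i) \<in> R then H i * H j else 0)"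
      using eq unfolding G_def by simp
    show ?thesis
    proof (cases "(j, i) \<in> R")
      case True then show ?thesis using eq2 False unfolding w_def by simp
    next
      case nR: False
      then have "(i, j) \<in> R" using totR False by blast
      then have "H i * H j = 0" using Htri 1(2) j by blast
      then show ?thesis using eq2 nR False unfolding w_def by simp
    qed
  qed
qed

lemma exchange_result:
  assumes DF: "\<And>a b::'a. a * b = 1 \<Longrightarrow> b * a = 1"
  shows "\<exists>e. (\<forall>i\<in>I. \<exists>r. e i = r * x i) \<and> (\<forall>i\<in>I. e i * e i = e i) \<and>
             (\<forall>i\<in>I. \<forall>j\<in>I. i \<noteq> j \<longrightarrow> e i * e j = 0) \<and> sums_to U e I 1"
proof -
  obtain v where vu: "v * tsum U H I = 1" using left_inv by blast
  have uv: "tsum U H I * v = 1" using DF[OF vu] .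
  define e where "e k = v * H k" for k
  have mem: "\<forall>i\<in>I. \<exists>r. e i = r * x i"
  proof
    fix i assume "i \<in> I"
    obtain c where "H i = c * x i" using Hc by blast
    then have "e i = (v * c) * x i" unfolding e_def by (simp add: mult.assoc)
    then show "\<exists>r. e i = r * x i" by (rule exI)
  qed
  have prod: "e i * e j = (if i = j then e j else 0)" if "i \<in> I" "j \<in> I" for i j
  proof -
    have "e i * e j = v * (H i * (v * H j))" unfolding e_def by (simp add: mult.assoc)
    also have "\<dots> = v * (if i = j then H j else 0)" using orth[OF vu uv that(2) that(1)] by simp
    finally show ?thesis unfolding e_def by simp
  qed
  have sI: "sums_to U H I (tsum U H I)" using sumH[OF subset_refl] .
  have "sums_to U e I (v * tsum U H I)" unfolding e_def using sums_mult_left[OF sI] .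
  then have "sums_to U e I 1" using vu by simp
  moreover have "\<forall>i\<in>I. e i * e i = e i" using prod by simp
  moreover have "\<forall>i\<in>I. \<forall>j\<in>I. i \<noteq> j \<longrightarrow> e i * e j = 0" using prod by simp
  ultimately show ?thesis using mem by (intro exI[of _ e] conjI)
qed

end

end


theorem theorem2:
  fixes U :: "'a::ring_1 set set"
  assumes "nice_idx U TYPE('a set \<times> nat)"
    and "nice_idx U TYPE('i)"
    and "dedekind_finite TYPE('a)"
    and "vn_regular TYPE('a)"
  shows "exchange_idx U TYPE('i)"
proof -
  have lh: "linear_hausdorff U" using assms(2) unfolding nice_idx_def by (elim conjE)
  have reg: "\<And>a::'a. \<exists>y. a = a * y * a" using assms(4) unfolding vn_regular_def by blast
  have DF: "\<And>a b::'a. a * b = 1 \<Longrightarrow> b * a = 1" using assms(3) unfolding dedekind_finite_def by blast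
  obtain r :: "'i rel" where wo: "well_order_on UNIV r" using well_order_on by blast
  define R where "R = r - Id"
  have wfR: "wf R" using wo unfolding well_order_on_def R_def by blast
  have lin: "linear_order_on UNIV r" using wo unfolding well_order_on_def by blast
  then have tot: "total_on UNIV r" and po: "partial_order_on UNIV r"
    unfolding linear_order_on_def by blast+
  then have tr: "trans r" and an: "antisym r"
    unfolding partial_order_on_def preorder_on_def by blast+
  have totR: "(a, b) \<in> R \<or> (b, a) \<in> R" if "a \<noteq> b" for a b
    using tot that unfolding total_on_def R_def by blast
  have transR: "trans R"
  proof (rule transI)
    fix a b c assume ab: "(a, b) \<in> R" and bc: "(b, c) \<in> R"
    then have "(a, b) \<in> r" "(b, c) \<in> r" "a \<noteq> b" "b \<noteq> c" unfolding R_def by auto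
    then have "(a, c) \<in> r" using tr unfolding trans_def by blast
    moreover have "a \<noteq> c"
    proof
      assume "a = c"
      then have "(b, a) \<in> r" using \<open>(b, c) \<in> r\<close> by simp
      then have "a = b" using an \<open>(a, b) \<in> r\<close> unfolding antisym_def by blast
      then show False using \<open>a \<noteq> b\<close> by simp
    qed
    ultimately show "(a, c) \<in> R" unfolding R_def by simp
  qed
  show ?thesis unfolding exchange_idx_def
  proof (intro allI impI)
    fix I :: "'i set" and x :: "'i \<Rightarrow> 'a"
    assume s1: "sums_to U x I 1"
    define F where "F = (\<lambda>g i. if i \<in> I then hstep (tsum U g {k\<in>I. (k, i) \<in> R}) (x i) else (0::'a))"
    define H where "H = wfrec R F"
    have Hdef: "H i = (if i \<in> I then hstep (tsum U H {k\<in>I. (k, i) \<in> R}) (x i) else 0)" for i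
    proof -
      have "H i = F (cut H R i) i" unfolding H_def by (rule wfrec[OF wfR])
      moreover have "tsum U (cut H R i) {k\<in>I. (k, i) \<in> R} = tsum U H {k\<in>I. (k, i) \<in> R}"
        by (rule tsum_cong) (simp add: cut_apply)
      ultimately show ?thesis unfolding F_def by simp
    qed
    show "\<exists>e. (\<forall>i\<in>I. \<exists>r. e i = r * x i) \<and> (\<forall>i\<in>I. e i * e i = e i) \<and>
             (\<forall>i\<in>I. \<forall>j\<in>I. i \<noteq> j \<longrightarrow> e i * e j = 0) \<and> sums_to U e I 1"
      by (rule exchange_result[OF lh assms(2) reg s1 wfR totR transR Hdef DF])
  qed
qed

end
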